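(* Let $X$ be a Markov chain on a finite state space $\Omega$, let $y\in\Omega$, and let $T$ be a positive integer. Let $x\in\Omega$ be a state minimizing $\mathbb{P}_x(\tau_y\le T)$ over all starting states, where $\tau_y$ is the hitting time of $y$. Then $\mathbb{P}_x(\tau_y\le T)\le\frac{T}{\mathbb{E}_x\tau_y}$.
   Context: $\tau_y=\min\{t\ge0:X_t=y\}$; $\mathbb{P}_x,\mathbb{E}_x$ refer to the chain started at $x$. *)

theory Defs
  imports "HOL-Analysis.Analysis"
begin

definition stochastic_matrix :: "('a::finite \<Rightarrow> 'a \<Rightarrow> real) \<Rightarrow> bool" where
  "stochastic_matrix P \<longleftrightarrow> (\<forall>x z. 0 \<le> P x z) \<and> (\<forall>x. (\<Sum>z\<in>UNIV. P x z) = 1)"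

text \<open>hit_le P y n x = P_x(tau_y \<le> n), tau_y = min{t \<ge> 0 : X_t = y},
  computed by first-step analysis of the chain with transition matrix P.\<close>
fun hit_le :: "('a::finite \<Rightarrow> 'a \<Rightarrow> real) \<Rightarrow> 'a \<Rightarrow> nat \<Rightarrow> 'a \<Rightarrow> real" where
  "hit_le P y 0 x = (if x = y then 1 else 0)"
| "hit_le P y (Suc n) x = (if x = y then 1 else (\<Sum>z\<in>UNIV. P x z * hit_le P y n z))"

text \<open>E_x tau_y (possibly infinite) as the tail sum  sum_{t \<ge> 0} P_x(tau_y > t).\<close>
definition exp_hit :: "('a::finite \<Rightarrow> 'a \<Rightarrow> real) \<Rightarrow> 'a \<Rightarrow> 'a \<Rightarrow> ennreal" where
  "exp_hit P y x = (\<Sum>t. ennreal (1 - hit_le P y t x))"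

end

theory Submission
  imports Defs
begin

lemma hit_bounds:
  assumes "stochastic_matrix P"
  shows "0 \<le> hit_le P y n z \<and> hit_le P y n z \<le> 1"
proof (induction n arbitrary: z)
  case 0 then show ?case by simp
next
  case (Suc n)
  have nn: "\<And>x w. 0 \<le> P x w" and s1: "\<And>x. (\<Sum>w\<in>UNIV. P x w) = 1"
    using assms by (auto simp: stochastic_matrix_def)
  have "(\<Sum>w\<in>UNIV. P z w * hit_le P y n w) \<le> (\<Sum>w\<in>UNIV. P z w)"
    by (rule sum_mono) (use Suc nn in \<open>auto intro: mult_left_le\<close>)
  moreover have "0 \<le> (\<Sum>w\<in>UNIV. P z w * hit_le P y n w)"
    by (rule sum_nonneg) (use Suc nn in auto)
  ultimately show ?case using s1[of z] by auto
qed

lemma q_suc: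
  assumes "stochastic_matrix P" "z \<noteq> y"
  shows "1 - hit_le P y (Suc n) z = (\<Sum>w\<in>UNIV. P z w * (1 - hit_le P y n w))"
proof -
  have s1: "(\<Sum>w\<in>UNIV. P z w) = 1" using assms by (auto simp: stochastic_matrix_def)
  have "(\<Sum>w\<in>UNIV. P z w * (1 - hit_le P y n w)) = (\<Sum>w\<in>UNIV. P z w) - (\<Sum>w\<in>UNIV. P z w * hit_le P y n w)"
    by (simp add: algebra_simps sum_subtractf)
  then show ?thesis using assms(2) s1 by simp
qed

lemma hit_y: "hit_le P y n y = 1"
  by (cases n) auto

lemma q_mult:
  assumes "stochastic_matrix P" "\<And>w. 1 - hit_le P y m w \<le> c"
  shows "1 - hit_le P y (n + m) z \<le> (1 - hit_le P y n z) * c"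
proof (induction n arbitrary: z)
  case 0
  show ?case
  proof (cases "z = y")
    case True then show ?thesis by (simp add: hit_y)
  next
    case False then show ?thesis using assms(2)[of z] by simp
  qed
next
  case (Suc n)
  show ?case
  proof (cases "z = y")
    case True then show ?thesis by (simp add: hit_y)
  next
    case False
    have nn: "\<And>x w. 0 \<le> P x w" using assms by (auto simp: stochastic_matrix_def)
    have "1 - hit_le P y (Suc (n + m)) z = (\<Sum>w\<in>UNIV. P z w * (1 - hit_le P y (n+m) w))"
      using q_suc[OF assms(1) False] .
    also have "\<dots> \<le> (\<Sum>w\<in>UNIV. P z w * ((1 - hit_le P y n w) * c))"
      by (rule sum_mono) (use Suc nn in \<open>auto intro: mult_left_mono\<close>)
    also have "\<dots> = (\<Sum>w\<in>UNIV. P z w * (1 - hit_le P y n w)) * c"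
      by (simp add: sum_distrib_right mult.assoc)
    also have "\<dots> = (1 - hit_le P y (Suc n) z) * c"
      using q_suc[OF assms(1) False] by simp
    finally show ?thesis by simp
  qed
qed

lemma sum_split_add: "sum f {..<a+(b::nat)} = sum f {..<a} + (\<Sum>i<b. f (a+i))"
  by (induction b) (auto simp: add.assoc)

theorem lemma6p6:
  fixes P :: "'a::finite \<Rightarrow> 'a \<Rightarrow> real" and x y :: 'a and T :: nat
  assumes "stochastic_matrix P"
    and "T > 0"
    and "\<forall>x'. hit_le P y T x \<le> hit_le P y T x'"
  shows "ennreal (hit_le P y T x) \<le> ennreal (real T) / exp_hit P y x"
proof -
  define p where "p = hit_le P y T x"
  define q where "q = (\<lambda>t. 1 - hit_le P y t x)"
  have hb: "\<And>n z. 0 \<le> hit_le P y n z \<and> hit_le P y n z \<le> 1" using hit_bounds[OF assms(1)] by blast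
  have p01: "0 \<le> p" "p \<le> 1" using hb p_def by auto
  have cT: "\<And>w. 1 - hit_le P y T w \<le> 1 - p" using assms(3) p_def by auto
  have qpow: "q (K*T + r) \<le> (1-p)^K" for K r
  proof (induction K)
    case 0 then show ?case using hb q_def by simp
  next
    case (Suc K)
    have "q (Suc K * T + r) = 1 - hit_le P y ((K*T + r) + T) x" by (simp add: q_def algebra_simps)
    also have "\<dots> \<le> q (K*T+r) * (1-p)" unfolding q_def by (rule q_mult[OF assms(1) cT])
    also have "\<dots> \<le> (1-p)^K * (1-p)" by (rule mult_right_mono) (use Suc p01 in auto)
    finally show ?case by (simp add: mult.commute)
  qed
  have q0: "\<And>t. 0 \<le> q t" using hb q_def by (simp add: algebra_simps)
  have part: "(\<Sum>t<K*T. q t) \<le> real T * (\<Sum>k<K. (1-p)^k)" for K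
  proof (induction K)
    case 0 then show ?case by simp
  next
    case (Suc K)
    have "(\<Sum>t<Suc K*T. q t) = (\<Sum>t<K*T. q t) + (\<Sum>i<T. q (K*T+i))"
      using sum_split_add[of q "K*T" T] by (simp add: add.commute)
    also have "(\<Sum>i<T. q (K*T+i)) \<le> (\<Sum>i<T. (1-p)^K)" by (rule sum_mono) (rule qpow)
    finally show ?case using Suc by (simp add: algebra_simps)
  qed
  show ?thesis
  proof (cases "p = 0")
    case True then show ?thesis by (simp add: p_def)
  next
    case False
    then have pp: "0 < p" using p01 by simp
    have geo: "(\<Sum>k<K. (1-p)^k) \<le> 1/p" for K
    proof -
      have "(\<Sum>k<K. (1-p)^k) = (1 - (1-p)^K) / (1 - (1-p))"
        using pp by (simp add: sum_gp_strict)
      also have "\<dots> \<le> 1/p" using pp p01 by (simp add: divide_right_mono)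
      finally show ?thesis .
    qed
    have bnd: "(\<Sum>t<n. q t) \<le> real T / p" for n
    proof -
      have "(\<Sum>t<n. q t) \<le> (\<Sum>t<n*T. q t)"
        by (rule sum_mono2) (use assms(2) q0 in auto)
      also have "\<dots> \<le> real T * (1/p)" using part[of n] geo[of n]
        by (meson mult_left_mono of_nat_0_le_iff order_trans)
      finally show ?thesis by simp
    qed
    have E: "exp_hit P y x \<le> ennreal (real T / p)"
      unfolding exp_hit_def
    proof (rule suminf_le_const[OF summableI])
      fix n
      have "(\<Sum>t<n. ennreal (1 - hit_le P y t x)) = ennreal (\<Sum>t<n. q t)"
        using q0 by (simp add: q_def sum_ennreal)
      also have "\<dots> \<le> ennreal (real T / p)" using bnd by (simp add: ennreal_leI)
      finally show "(\<Sum>t<n. ennreal (1 - hit_le P y t x)) \<le> ennreal (real T / p)" .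
    qed
    show ?thesis
    proof (cases "exp_hit P y x = 0")
      case True then show ?thesis using assms(2) by simp
    next
      case False
      have fin: "exp_hit P y x < top" using E by (simp add: le_less_trans)
      have "ennreal p * exp_hit P y x \<le> ennreal p * ennreal (real T / p)"
        by (rule mult_left_mono[OF E]) simp
      also have "\<dots> = ennreal (real T)" using pp p01 by (simp add: ennreal_mult[symmetric])
      finally have "ennreal p * exp_hit P y x \<le> ennreal (real T)" .
      then have "\<not> (ennreal (real T) / exp_hit P y x < ennreal p)"
        using divide_less_ennreal[OF False fin] by (simp add: mult.commute not_less)
      then show ?thesis by (simp add: p_def not_less)
    qed
  qed
qed

end
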